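(* Suppose $F\in\mathcal{A}\setminus\{\delta_0\}$ is not aperiodic. Then there exist $m\in\{2,3,4,\dots\}$ and an aperiodic probability $\widetilde{F}\in\mathcal{A}$ such that $\mathrm{supp}(F)\subseteq\{0,m,2m,\dots\}$ and $F(km)=\widetilde{F}(k)$ for all $k\in\mathbb{Z}^+$.
   Context: $\mathbb{P}(\mathbb{Z}^+)$ is the set of functions $F:\mathbb{Z}\to[0,1]$ with $\sum_kF(k)=1$ and $F(k)=0$ for $k<0$; $\delta_m$ is the point mass at $m$; $F^{(n)}$ is the $n$-th convolution power. $\mathcal{A}=\{F\in\mathbb{P}(\mathbb{Z}^+):\sup_{n\in\mathbb{N}}n\sum_k|F^{(n)}(k)-F^{(n+1)}(k)|<\infty\}$. $F$ is adapted if $\mathrm{supp}(F)=\{k:F(k)\ne0\}$ generates the additive group $\mathbb{Z}$, and aperiodic if every translate $\delta_m*F$, $m\in\mathbb{Z}$, is adapted. *)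

theory Defs
  imports "HOL-Analysis.Analysis"
begin

definition probZp :: "(int \<Rightarrow> real) set" where
  "probZp = {F. (\<forall>k. 0 \<le> F k \<and> F k \<le> 1) \<and> (F has_sum 1) UNIV \<and> (\<forall>k<0. F k = 0)}"

definition delta :: "int \<Rightarrow> int \<Rightarrow> real" where
  "delta m = (\<lambda>k. if k = m then 1 else 0)"

definition conv :: "(int \<Rightarrow> real) \<Rightarrow> (int \<Rightarrow> real) \<Rightarrow> int \<Rightarrow> real" where
  "conv F G = (\<lambda>k. \<Sum>\<^sub>\<infinity>j. F j * G (k - j))"

fun convpow :: "(int \<Rightarrow> real) \<Rightarrow> nat \<Rightarrow> int \<Rightarrow> real" where
  "convpow F 0 = delta 0"
| "convpow F (Suc n) = conv F (convpow F n)"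

definition classA :: "(int \<Rightarrow> real) set" where
  "classA = {F \<in> probZp. \<exists>C. \<forall>n::nat. n \<ge> 1 \<longrightarrow>
      real n * (\<Sum>\<^sub>\<infinity>k. \<bar>convpow F n k - convpow F (Suc n) k\<bar>) \<le> C}"

definition supp :: "(int \<Rightarrow> real) \<Rightarrow> int set" where
  "supp F = {k. F k \<noteq> 0}"

definition int_subgroup :: "int set \<Rightarrow> bool" where
  "int_subgroup H = (0 \<in> H \<and> (\<forall>x\<in>H. \<forall>y\<in>H. x - y \<in> H))"

definition generates_Z :: "int set \<Rightarrow> bool" where
  "generates_Z S = (\<forall>H. int_subgroup H \<and> S \<subseteq> H \<longrightarrow> H = UNIV)"

definition adapted :: "(int \<Rightarrow> real) \<Rightarrow> bool" where
  "adapted F = generates_Z (supp F)"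

definition aperiodic :: "(int \<Rightarrow> real) \<Rightarrow> bool" where
  "aperiodic F = (\<forall>m::int. adapted (conv (delta m) F))"

end

theory Submission
  imports Defs
begin

definition pd :: "(int \<Rightarrow> real) \<Rightarrow> bool" where
  "pd F = ((\<forall>k. 0 \<le> F k) \<and> (F has_sum 1) UNIV)"

lemma pd_le1: assumes "pd F" shows "F k \<le> 1"
proof -
  have "(F has_sum F k) {k}" using has_sum_finite[of "{k}" F] by simp
  moreover have "(F has_sum 1) UNIV" using assms pd_def by blast
  ultimately show ?thesis
    by (rule has_sum_mono_neutral) (use assms in \<open>auto simp: pd_def\<close>)
qed

lemma has_sum_shift: "((\<lambda>k. G (k - j)) has_sum s) UNIV \<longleftrightarrow> (G has_sum s) (UNIV::int set)"
proof -
  have "inj_on (\<lambda>k::int. k - j) UNIV" by (auto simp: inj_on_def)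
  moreover have "(\<lambda>k::int. k - j) ` UNIV = UNIV" by (auto intro: image_eqI[where x="_ + j"])
  ultimately show ?thesis using has_sum_reindex[of "\<lambda>k::int. k - j" UNIV G s] by (simp add: o_def)
qed

lemma conv_pd: assumes F: "pd F" and G: "pd G" shows "pd (conv F G)"
proof -
  define h where "h = (\<lambda>(j,k). F j * G (k - j))"
  have fib: "((\<lambda>k. h(j,k)) has_sum F j) UNIV" for j
  proof -
    have "((\<lambda>k. G (k - j)) has_sum 1) UNIV" using G by (simp add: has_sum_shift pd_def)
    from has_sum_cmult_right[OF this, of "F j"] show ?thesis by (simp add: h_def)
  qed
  have Fs: "(F has_sum 1) UNIV" using F pd_def by blast
  have sumh: "h summable_on Sigma UNIV (\<lambda>_. UNIV)"
  proof (rule summable_on_SigmaI[OF fib])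
    show "F summable_on UNIV" using Fs by (rule has_sum_imp_summable)
    fix x y show "0 \<le> h (x, y)" using F G unfolding h_def pd_def by simp
  qed
  have "(h has_sum 1) (Sigma UNIV (\<lambda>_. UNIV))"
    by (rule has_sum_SigmaI[OF fib Fs sumh])
  hence H: "((\<lambda>(k,j). h(j,k)) has_sum 1) (Sigma UNIV (\<lambda>_. UNIV))"
    using has_sum_swap[where f=h and S=1 and A=UNIV and B=UNIV] by simp
  have fib2: "((\<lambda>j. (\<lambda>(k,j). h(j,k)) (k,j)) has_sum conv F G k) UNIV" for k
  proof -
    have "(\<lambda>j. norm (F j * G (k - j))) summable_on UNIV"
    proof (rule Infinite_Sum.abs_summable_on_comparison_test'[where g=F and f="\<lambda>j. F j * G (k - j)"])
      show "F summable_on UNIV" using Fs by (rule has_sum_imp_summable)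
      fix j
      have "0 \<le> F j" "0 \<le> G (k - j)" "G (k - j) \<le> 1" using F G pd_le1[OF G] unfolding pd_def by auto
      thus "norm (F j * G (k - j)) \<le> F j" by (simp add: abs_mult mult_left_le)
    qed
    hence "(\<lambda>j. F j * G (k - j)) summable_on UNIV"
      using F G unfolding pd_def by (simp add: abs_mult)
    thus ?thesis by (simp add: h_def conv_def has_sum_infsum)
  qed
  have "(conv F G has_sum 1) UNIV"
    by (rule has_sum_Sigma'[OF H fib2])
  moreover have "0 \<le> conv F G k" for k
    unfolding conv_def using F G by (auto simp: pd_def intro!: infsum_nonneg)
  ultimately show ?thesis by (simp add: pd_def)
qed

lemma conv_delta: "conv (delta a) G k = G (k - a)"
proof -
  have "conv (delta a) G k = infsum (\<lambda>j. delta a j * G (k - j)) {a}"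
    unfolding conv_def by (rule infsum_cong_neutral) (auto simp: delta_def)
  thus ?thesis by (simp add: delta_def)
qed

lemma pd_delta: "pd (delta a)"
proof -
  have "(delta a has_sum 1) {a}" using has_sum_finite[of "{a}" "delta a"] by (simp add: delta_def)
  moreover have "(delta a has_sum 1) UNIV \<longleftrightarrow> (delta a has_sum 1) {a}"
    by (rule has_sum_cong_neutral) (auto simp: delta_def)
  ultimately have "(delta a has_sum 1) UNIV" by simp
  thus ?thesis by (simp add: pd_def delta_def)
qed

lemma conv_supp: assumes "conv F G k \<noteq> 0" shows "\<exists>j. F j \<noteq> 0 \<and> G (k - j) \<noteq> 0"
proof (rule ccontr)
  assume "\<not> ?thesis"
  hence "\<And>j. F j * G (k - j) = 0" by auto
  hence "conv F G k = 0" unfolding conv_def by (simp add: infsum_0)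
  with assms show False by simp
qed

lemma convpow_pd: "pd F \<Longrightarrow> pd (convpow F n)"
  by (induction n) (auto simp: pd_delta conv_pd)

lemma convpow_supp:
  assumes "\<And>k. F k \<noteq> 0 \<Longrightarrow> d dvd (k - r)"
  shows "convpow F n k \<noteq> 0 \<Longrightarrow> d dvd (k - int n * r)"
proof (induction n arbitrary: k)
  case 0 thus ?case by (simp add: delta_def split: if_splits)
next
  case (Suc n)
  from conv_supp[of F "convpow F n" k] Suc.prems obtain j where
    j: "F j \<noteq> 0" "convpow F n (k - j) \<noteq> 0" by auto
  have "d dvd (j - r)" using assms j(1) by blast
  moreover have "d dvd (k - j - int n * r)" using Suc.IH j(2) by blast
  ultimately have "d dvd ((j - r) + (k - j - int n * r))" by (rule dvd_add)
  thus ?case by (simp add: algebra_simps)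
qed

lemma probZp_pd: "F \<in> probZp \<Longrightarrow> pd F"
  by (simp add: probZp_def pd_def)

lemma L1:
  assumes A: "F \<in> classA" and S: "\<And>k. F k \<noteq> 0 \<Longrightarrow> d dvd (k - r)"
  shows "d dvd r"
proof (rule ccontr)
  assume nd: "\<not> d dvd r"
  have pF: "pd F" using A by (simp add: classA_def probZp_pd)
  obtain C where C: "\<And>n::nat. n \<ge> 1 \<Longrightarrow>
      real n * (\<Sum>\<^sub>\<infinity>k. \<bar>convpow F n k - convpow F (Suc n) k\<bar>) \<le> C"
    using A unfolding classA_def by blast
  have key: "1 \<le> (\<Sum>\<^sub>\<infinity>k. \<bar>convpow F n k - convpow F (Suc n) k\<bar>)" for n
  proof -
    define a where "a = convpow F n"
    define b where "b = convpow F (Suc n)"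
    have pa: "pd a" and pb: "pd b" unfolding a_def b_def using convpow_pd[OF pF] by blast+
    have ha: "(a has_sum 1) UNIV" using pa pd_def by blast
    have hb: "(b has_sum 1) UNIV" using pb pd_def by blast
    have "((\<lambda>k. a k + - b k) has_sum (1 + - 1)) UNIV"
      by (rule has_sum_add[OF ha]) (use has_sum_uminusI[OF hb] in simp)
    hence "(\<lambda>k. a k - b k) summable_on UNIV" unfolding summable_on_def by auto
    hence sab: "(\<lambda>k. \<bar>a k - b k\<bar>) summable_on UNIV"
      using summable_on_iff_abs_summable_on_real by force
    have pt: "a k \<le> \<bar>a k - b k\<bar>" for k
    proof (cases "b k = 0")
      case True thus ?thesis by simp
    next
      case False
      hence d1: "d dvd (k - int (Suc n) * r)" unfolding b_def using convpow_supp[where F=F and d=d and r=r and n="Suc n" and k=k, OF S] by blast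
      have "a k = 0"
      proof (rule ccontr)
        assume "a k \<noteq> 0"
        hence d2: "d dvd (k - int n * r)" unfolding a_def using convpow_supp[where F=F and d=d and r=r and n=n and k=k, OF S] by blast
        have "d dvd ((k - int n * r) - (k - int (Suc n) * r))" using d1 d2 by (rule dvd_diff[rotated])
        hence "d dvd r" by (simp add: algebra_simps)
        with nd show False by simp
      qed
      thus ?thesis by simp
    qed
    have "infsum a UNIV \<le> (\<Sum>\<^sub>\<infinity>k. \<bar>a k - b k\<bar>)"
      by (rule infsum_mono[OF has_sum_imp_summable[OF ha] sab pt])
    moreover have "infsum a UNIV = 1" using ha by (rule infsumI)
    ultimately show ?thesis by (simp add: a_def b_def)
  qed
  define n where "n = nat \<lceil>C\<rceil> + 1"
  have "real n * 1 \<le> real n * (\<Sum>\<^sub>\<infinity>k. \<bar>convpow F n k - convpow F (Suc n) k\<bar>)"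
    by (rule mult_left_mono[OF key]) simp
  also have "\<dots> \<le> C" using C[of n] by (simp add: n_def)
  finally have "real n \<le> C" by simp
  moreover have "C < real n" unfolding n_def by linarith
  ultimately show False by simp
qed

lemma subgroup_mult:
  assumes H: "int_subgroup H" and x: "x \<in> H" shows "k * x \<in> H"
proof -
  have z: "0 \<in> H" and cl: "\<And>a b. a \<in> H \<Longrightarrow> b \<in> H \<Longrightarrow> a - b \<in> H"
    using H unfolding int_subgroup_def by auto
  have nat: "int n * x \<in> H" for n
  proof (induction n)
    case 0 thus ?case using z by simp
  next
    case (Suc n)
    have "int n * x - (0 - x) \<in> H" using cl[OF Suc cl[OF z x]] .
    thus ?case by (simp add: algebra_simps)
  qed
  show ?thesis
  proof (cases "k \<ge> 0")
    case True
    hence "k = int (nat k)" by simp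
    thus ?thesis using nat[of "nat k"] by simp
  next
    case False
    hence e: "k = - int (nat (-k))" by simp
    have "0 - int (nat (-k)) * x \<in> H" using cl[OF z nat] .
    thus ?thesis by (subst e) simp
  qed
qed

lemma subgroup_cyclic:
  assumes H: "int_subgroup H" and nU: "H \<noteq> UNIV"
  shows "\<exists>d\<ge>0. d \<noteq> 1 \<and> (\<forall>x\<in>H. d dvd x)"
proof (cases "H \<subseteq> {0}")
  case True thus ?thesis by (intro exI[of _ 0]) auto
next
  case False
  then obtain x where x: "x \<in> H" "x \<noteq> 0" by auto
  have ex: "\<exists>n::nat. n > 0 \<and> int n \<in> H"
  proof (cases "x > 0")
    case True thus ?thesis using x by (intro exI[of _ "nat x"]) auto
  next
    case False
    have "(-1) * x \<in> H" by (rule subgroup_mult[OF H x(1)])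
    thus ?thesis using x False by (intro exI[of _ "nat (-x)"]) auto
  qed
  define N where "N = (LEAST n::nat. n > 0 \<and> int n \<in> H)"
  have N: "N > 0" "int N \<in> H" using LeastI_ex[OF ex] unfolding N_def by auto
  have Nmin: "\<And>m. m < N \<Longrightarrow> \<not> (m > 0 \<and> int m \<in> H)"
    unfolding N_def by (rule not_less_Least)
  have dv: "int N dvd y" if y: "y \<in> H" for y
  proof -
    have cl: "\<And>a b. a \<in> H \<Longrightarrow> b \<in> H \<Longrightarrow> a - b \<in> H"
      using H unfolding int_subgroup_def by auto
    have "y - (y div int N) * int N \<in> H" by (rule cl[OF y subgroup_mult[OF H N(2)]])
    hence m: "y mod int N \<in> H" by (simp add: minus_div_mult_eq_mod)
    have r: "0 \<le> y mod int N" "y mod int N < int N" using N(1) by auto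
    have "y mod int N = 0"
    proof (rule ccontr)
      assume "y mod int N \<noteq> 0"
      hence "nat (y mod int N) > 0" using r by simp
      moreover have "nat (y mod int N) < N" using r by simp
      moreover have "int (nat (y mod int N)) \<in> H" using m r by simp
      ultimately show False using Nmin by blast
    qed
    thus ?thesis by (simp add: dvd_eq_mod_eq_0)
  qed
  have "int N \<noteq> 1"
  proof
    assume "int N = 1"
    hence "k * 1 \<in> H" for k using subgroup_mult[OF H N(2), of k] by simp
    hence "H = UNIV" by auto
    with nU show False by simp
  qed
  thus ?thesis using dv by (intro exI[of _ "int N"]) auto
qed

lemma L2:
  assumes A: "G \<in> classA" and na: "\<not> adapted (conv (delta j) G)"
  shows "\<exists>d\<ge>0. d \<noteq> 1 \<and> (\<forall>k. G k \<noteq> 0 \<longrightarrow> d dvd k)"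
proof -
  from na obtain H where H: "int_subgroup H" "supp (conv (delta j) G) \<subseteq> H" "H \<noteq> UNIV"
    unfolding adapted_def generates_Z_def by blast
  obtain d where d: "d \<ge> 0" "d \<noteq> 1" "\<forall>x\<in>H. d dvd x"
    using subgroup_cyclic[OF H(1) H(3)] by blast
  have S: "d dvd (k - (- j))" if "G k \<noteq> 0" for k
  proof -
    have "conv (delta j) G (k + j) \<noteq> 0" using that by (simp add: conv_delta)
    hence "k + j \<in> H" using H(2) unfolding supp_def by blast
    thus ?thesis using d(3) by simp
  qed
  have "d dvd (- j)" by (rule L1[OF A S])
  hence "d dvd k" if "G k \<noteq> 0" for k
  proof -
    have "d dvd ((k - (- j)) + (- j))" using S[OF that] \<open>d dvd (- j)\<close> by (rule dvd_add)
    thus ?thesis by simp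
  qed
  thus ?thesis using d by blast
qed

lemma reindex_mult:
  fixes g :: "int \<Rightarrow> real"
  assumes m: "m \<noteq> 0" and z: "\<And>x. \<not> m dvd x \<Longrightarrow> g x = 0"
  shows "(g has_sum s) UNIV \<longleftrightarrow> ((\<lambda>i. g (i * m)) has_sum s) UNIV"
    and "infsum g UNIV = infsum (\<lambda>i. g (i * m)) UNIV"
proof -
  define T where "T = range (\<lambda>i::int. i * m)"
  have inj: "inj_on (\<lambda>i::int. i * m) UNIV" using m by (auto simp: inj_on_def)
  have out: "g x = 0" if "x \<in> UNIV - T" for x
  proof -
    have "\<not> m dvd x"
    proof
      assume "m dvd x"
      then obtain i where "x = m * i" by (rule dvdE)
      hence "x \<in> T" unfolding T_def by (auto simp: mult.commute)
      with that show False by simp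
    qed
    thus ?thesis by (rule z)
  qed
  have "(g has_sum s) UNIV \<longleftrightarrow> (g has_sum s) T"
    by (rule has_sum_cong_neutral) (use out in auto)
  also have "\<dots> \<longleftrightarrow> ((\<lambda>i. g (i * m)) has_sum s) UNIV"
    unfolding T_def using has_sum_reindex[OF inj, of g s] by (simp add: o_def)
  finally show "(g has_sum s) UNIV \<longleftrightarrow> ((\<lambda>i. g (i * m)) has_sum s) UNIV" .
  have "infsum g UNIV = infsum g T"
    by (rule infsum_cong_neutral) (use out in auto)
  also have "\<dots> = infsum (\<lambda>i. g (i * m)) UNIV"
    unfolding T_def using infsum_reindex[OF inj, of g] by (simp add: o_def)
  finally show "infsum g UNIV = infsum (\<lambda>i. g (i * m)) UNIV" .
qed

lemma convpow_vanish:
  assumes z: "\<And>x. \<not> m dvd x \<Longrightarrow> F x = 0"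
  shows "\<not> m dvd x \<Longrightarrow> convpow F n x = 0"
proof -
  have S: "\<And>k. F k \<noteq> 0 \<Longrightarrow> m dvd (k - 0)" using z by auto
  show "\<not> m dvd x \<Longrightarrow> convpow F n x = 0"
    using convpow_supp[where F=F and d=m and r=0 and n=n and k=x, OF S] by auto
qed

lemma convpow_transfer:
  assumes m: "m \<noteq> 0" and z: "\<And>x. \<not> m dvd x \<Longrightarrow> F x = 0"
  shows "convpow (\<lambda>k. F (k * m)) n k = convpow F n (k * m)"
proof (induction n arbitrary: k)
  case 0 thus ?case using m by (simp add: delta_def)
next
  case (Suc n)
  define g where "g = (\<lambda>j. F j * convpow F n (k * m - j))"
  have gz: "\<And>x. \<not> m dvd x \<Longrightarrow> g x = 0" unfolding g_def using z by simp
  have "convpow (\<lambda>k. F (k * m)) (Suc n) k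
        = (\<Sum>\<^sub>\<infinity>i. F (i * m) * convpow (\<lambda>k. F (k * m)) n (k - i))"
    by (simp add: conv_def)
  also have "\<dots> = (\<Sum>\<^sub>\<infinity>i. g (i * m))"
    unfolding g_def using Suc.IH by (simp add: algebra_simps)
  also have "\<dots> = infsum g UNIV" using reindex_mult(2)[OF m gz] by simp
  also have "\<dots> = convpow F (Suc n) (k * m)" by (simp add: conv_def g_def)
  finally show ?case .
qed

lemma delta0_eq: assumes "F \<in> probZp" and "\<And>k. F k \<noteq> 0 \<Longrightarrow> k = 0" shows "F = delta 0"
proof -
  have h: "(F has_sum 1) UNIV" using assms(1) by (simp add: probZp_def)
  have "(F has_sum 1) UNIV \<longleftrightarrow> (F has_sum 1) {0}"
    by (rule has_sum_cong_neutral) (use assms(2) in auto)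
  with h have "(F has_sum 1) {0}" by simp
  moreover have "(F has_sum F 0) {0}" using has_sum_finite[of "{0}" F] by simp
  ultimately have "F 0 = 1" using has_sum_unique by blast
  thus ?thesis using assms(2) by (auto simp: delta_def fun_eq_iff)
qed

theorem lemma4p3:
  fixes F :: "int \<Rightarrow> real"
  assumes "F \<in> classA" and "F \<noteq> delta 0" and "\<not> aperiodic F"
  shows "\<exists>(m::int) Ft. m \<ge> 2 \<and> Ft \<in> classA \<and> aperiodic Ft \<and>
           supp F \<subseteq> {k * m | k. k \<ge> 0} \<and> (\<forall>k\<ge>0. F (k * m) = Ft k)"
proof -
  have FA: "F \<in> classA" by fact
  have FP: "F \<in> probZp" using FA by (simp add: classA_def)
  from assms(3) obtain j where "\<not> adapted (conv (delta j) F)" unfolding aperiodic_def by blast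
  from L2[OF FA this] obtain d where d: "d \<ge> 0" "d \<noteq> 1" "\<And>k. F k \<noteq> 0 \<Longrightarrow> d dvd k" by blast
  define m where "m = Gcd (supp F)"
  have mdv: "\<And>k. F k \<noteq> 0 \<Longrightarrow> m dvd k" unfolding m_def supp_def by (rule Gcd_dvd) simp
  have mgr: "\<And>c. (\<And>k. F k \<noteq> 0 \<Longrightarrow> c dvd k) \<Longrightarrow> c dvd m"
    unfolding m_def supp_def by (rule Gcd_greatest) simp
  have m0: "m \<ge> 0" unfolding m_def by simp
  have mne: "m \<noteq> 0"
  proof
    assume "m = 0"
    hence "\<And>k. F k \<noteq> 0 \<Longrightarrow> k = 0" using mdv by fastforce
    hence "F = delta 0" using delta0_eq[OF FP] by blast
    with assms(2) show False by simp
  qed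
  have "d dvd m" using mgr d(3) by blast
  hence "d \<le> m" using m0 mne by (intro zdvd_imp_le) auto
  moreover have "d \<noteq> 0" using \<open>d dvd m\<close> mne by auto
  ultimately have m2: "m \<ge> 2" using d by linarith
  have z: "\<And>x. \<not> m dvd x \<Longrightarrow> F x = 0" using mdv by blast
  define Ft where "Ft = (\<lambda>k. F (k * m))"
  have cpt: "convpow Ft n k = convpow F n (k * m)" for n k
    unfolding Ft_def by (rule convpow_transfer[OF mne z])
  have FtP: "Ft \<in> probZp"
  proof -
    have "(F has_sum 1) UNIV" using FP by (simp add: probZp_def)
    hence "(Ft has_sum 1) UNIV" unfolding Ft_def using reindex_mult(1)[OF mne z] by simp
    moreover have "\<forall>k. 0 \<le> Ft k \<and> Ft k \<le> 1" using FP by (simp add: probZp_def Ft_def)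
    moreover have "\<forall>k<0. Ft k = 0"
    proof (intro allI impI)
      fix k :: int assume "k < 0"
      hence "k * m < 0" using m2 by (simp add: mult_neg_pos)
      thus "Ft k = 0" using FP by (simp add: probZp_def Ft_def)
    qed
    ultimately show ?thesis by (simp add: probZp_def)
  qed
  have FtA: "Ft \<in> classA"
  proof -
    obtain C where C: "\<And>n::nat. n \<ge> 1 \<Longrightarrow>
      real n * (\<Sum>\<^sub>\<infinity>k. \<bar>convpow F n k - convpow F (Suc n) k\<bar>) \<le> C"
      using FA unfolding classA_def by blast
    have eq: "(\<Sum>\<^sub>\<infinity>k. \<bar>convpow Ft n k - convpow Ft (Suc n) k\<bar>)
            = (\<Sum>\<^sub>\<infinity>k. \<bar>convpow F n k - convpow F (Suc n) k\<bar>)" for n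
    proof -
      have gz: "\<And>x. \<not> m dvd x \<Longrightarrow> \<bar>convpow F n x - convpow F (Suc n) x\<bar> = 0"
      proof -
        fix x assume nx: "\<not> m dvd x"
        have "convpow F n x = 0" by (rule convpow_vanish[where m=m and F=F, OF z nx])
        moreover have "convpow F (Suc n) x = 0" by (rule convpow_vanish[where m=m and F=F, OF z nx])
        ultimately show "\<bar>convpow F n x - convpow F (Suc n) x\<bar> = 0" by simp
      qed
      show ?thesis unfolding cpt using reindex_mult(2)[OF mne gz] by simp
    qed
    show ?thesis unfolding classA_def using FtP C eq by auto
  qed
  have apt: "aperiodic Ft"
  proof (rule ccontr)
    assume "\<not> aperiodic Ft"
    then obtain j' where "\<not> adapted (conv (delta j') Ft)" unfolding aperiodic_def by blast
    from L2[OF FtA this] obtain d' where d': "d' \<ge> 0" "d' \<noteq> 1" "\<And>k. Ft k \<noteq> 0 \<Longrightarrow> d' dvd k" by blast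
    have "d' * m dvd x" if Fx: "F x \<noteq> 0" for x
    proof -
      obtain i where i: "x = m * i" using mdv[OF Fx] by (rule dvdE)
      have "Ft i \<noteq> 0" using Fx i by (simp add: Ft_def mult.commute)
      hence "d' dvd i" by (rule d'(3))
      thus ?thesis using i by (simp add: mult.commute mult_dvd_mono)
    qed
    hence "d' * m dvd 1 * m" using mgr by simp
    hence "d' dvd 1" using mne by (simp only: dvd_mult_cancel_right) simp
    with d' show False by simp
  qed
  have "supp F \<subseteq> {k * m | k. k \<ge> 0}"
  proof
    fix x assume "x \<in> supp F"
    hence Fx: "F x \<noteq> 0" by (simp add: supp_def)
    obtain i where i: "x = m * i" using mdv[OF Fx] by (rule dvdE)
    have "x \<ge> 0" using Fx FP by (force simp: probZp_def)
    hence "i \<ge> 0" using i m2 by (simp add: zero_le_mult_iff)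
    thus "x \<in> {k * m | k. k \<ge> 0}" using i by (auto simp: mult.commute)
  qed
  thus ?thesis using m2 FtA apt by (intro exI[of _ m] exI[of _ Ft]) (auto simp: Ft_def)
qed

end
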